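(* Let $S$ be a $\Sigma_1$-sequent, $H$ a Herbrand structure of $S$, $D=(U_1,\dots,U_q)\circ W$ a decomposition of $H$ with $W=\{\bar w_1,\dots,\bar w_k\}$, and $S^\sim$ the schematic extended Herbrand sequent of $S$ w.r.t. $D$. Let $A$ be a formula in conjunctive normal form such that $[X\backslash\lambda\bar\alpha.A]$ is a solution of $S^\sim$. Then the procedure $\mathrm{SF}$ described below terminates on input $A$, and for every $B\in\mathrm{SF}(A)$, $[X\backslash\lambda\bar\alpha.B]$ is a solution of $S^\sim$. Procedure $\mathrm{SF}(A)$: (i) replace $A$ by the CNF obtained from $A$ by deleting all clauses containing none of the variables $\alpha_1,\dots,\alpha_n$; (ii) set $R:=\{A\}$; (iii) for each $B\in\mathrm{forget}(A)$: if the sequent $B[\bar\alpha\backslash\bar w_1],\dots,B[\bar\alpha\backslash\bar w_k],\Gamma\vdash\Delta$ is E-valid, set $R:=R\cup\mathrm{SF}(B)$; (iv) return $R$.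
   Context: We work in first-order predicate logic with equality. A $\Sigma_1$-sequent is a sequent $S$ of the form $\forall\bar x_1 F_1,\dots,\forall\bar x_p F_p\vdash\exists\bar x_{p+1}F_{p+1},\dots,\exists\bar x_q F_q$, where each $F_i$ is quantifier-free and $\bar x_i$ is a block of $k_i\ge 0$ variables. A sequent is E-valid if it is valid in predicate logic with equality (a quantifier-free formula or sequent with free variables is called E-valid if its universal closure is); a quasi-tautology is a quantifier-free E-valid sequent. A Herbrand structure of $S$ is a tuple $H=(H_1,\dots,H_q)$, $H_i$ a finite set of $k_i$-vectors of ground terms, such that, with $\mathcal F_i=\{F_i[\bar x_i\backslash\bar t]:\bar t\in H_i\}$ if $k_i>0$ and $\mathcal F_i=\{F_i\}$ if $k_i=0$, the sequent $\mathcal F_1\cup\dots\cup\mathcal F_p\vdash\mathcal F_{p+1}\cup\dots\cup\mathcal F_q$ is a quasi-tautology. A decomposition of $H$ is a pair $D=(U_1,\dots,U_q)\circ W$ where, for fresh variables $\bar\alpha=(\alpha_1,\dots,\alpha_n)$, each $U_i$ is a finite set of $k_i$-vectors of terms possibly containing the $\alpha_j$, and $W=\{\bar w_1,\dots,\bar w_k\}$ is a finite set of $n$-vectors of ground terms not containing any $\alpha_j$, such that $H_i=\{u[\bar\alpha\backslash\bar w]:u\in U_i,\bar w\in W\}$ for every $i$ with $k_i>0$. Put $\mathcal F'_i=\{F_i[\bar x_i\backslash\bar t]:\bar t\in U_i\}$ if $k_i>0$ and $\mathcal F'_i=\{F_i\}$ if $k_i=0$, and let $\Gamma=\mathcal F'_1\cup\dots\cup\mathcal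 F'_p$, $\Delta=\mathcal F'_{p+1}\cup\dots\cup\mathcal F'_q$. For an $n$-place predicate variable $X$, the schematic extended Herbrand sequent of $S$ w.r.t. $D$ is $S^\sim:\ X\bar\alpha\to\bigwedge_{i=1}^k X\bar w_i,\ \Gamma\vdash\Delta$. For a quantifier-free formula $A$ whose free variables are among $\alpha_1,\dots,\alpha_n$, $[X\backslash\lambda\bar\alpha.A]$ is a solution of $S^\sim$ if $S^\sim[X\backslash\lambda\bar\alpha.A]$ is a quasi-tautology. Forgetful reasoning: a CNF is regarded as a finite set of clauses $\{C_i\}_{i\in I}$ (the $\alpha_j$ being treated as constants). For clauses $C_1,C_2$, $\mathrm{res}(C_1,C_2)$ is the set of propositional resolvents of $C_1,C_2$ and $\mathrm{para}(C_1,C_2)$ is the set of clauses obtainable from $C_1,C_2$ by one ground paramodulation step. For a formula $F$ with CNF $\{C_i\}_{i\in I}$, $$\mathrm{forget}(F)=\Big\{C\wedge\bigwedge_{i\in I\setminus\{j,m\}}C_i\ \Big|\ j,m\in I,\ C\in\mathrm{res}(C_j,C_m)\cup\mathrm{para}(C_j,C_m)\Big\}.$$ *)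

theory Defs
  imports Main
begin

text \<open>Inside the matrix F_i of a Sigma_1-sequent, Var j (j < k_i) is the j-th variable
  of the block x_i.  Inside U_i, Gamma, Delta and the CNFs, Var j (j < n) is the
  fresh variable alpha_(j+1).\<close>

datatype 'f trm = Var nat | Fn 'f "'f trm list"

datatype ('f, 'p) atom = Pred 'p "'f trm list" | Equ "'f trm" "'f trm"

datatype ('f, 'p) fm =
    At "('f, 'p) atom" | Bot | Neg "('f, 'p) fm" | Conj "('f, 'p) fm" "('f, 'p) fm"
  | Disj "('f, 'p) fm" "('f, 'p) fm" | Imp "('f, 'p) fm" "('f, 'p) fm"

fun fv_trm :: "'f trm \<Rightarrow> nat set" where
  "fv_trm (Var j) = {j}"
| "fv_trm (Fn f ts) = (\<Union>t\<in>set ts. fv_trm t)"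

definition ground :: "'f trm \<Rightarrow> bool" where
  "ground t \<longleftrightarrow> fv_trm t = {}"

fun fv_atom :: "('f, 'p) atom \<Rightarrow> nat set" where
  "fv_atom (Pred P ts) = (\<Union>t\<in>set ts. fv_trm t)"
| "fv_atom (Equ s t) = fv_trm s \<union> fv_trm t"

fun fv_fm :: "('f, 'p) fm \<Rightarrow> nat set" where
  "fv_fm (At a) = fv_atom a"
| "fv_fm Bot = {}"
| "fv_fm (Neg F) = fv_fm F"
| "fv_fm (Conj F G) = fv_fm F \<union> fv_fm G"
| "fv_fm (Disj F G) = fv_fm F \<union> fv_fm G"
| "fv_fm (Imp F G) = fv_fm F \<union> fv_fm G"

fun subst_trm :: "(nat \<Rightarrow> 'f trm) \<Rightarrow> 'f trm \<Rightarrow> 'f trm" where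
  "subst_trm \<theta> (Var j) = \<theta> j"
| "subst_trm \<theta> (Fn f ts) = Fn f (map (subst_trm \<theta>) ts)"

fun subst_atom :: "(nat \<Rightarrow> 'f trm) \<Rightarrow> ('f, 'p) atom \<Rightarrow> ('f, 'p) atom" where
  "subst_atom \<theta> (Pred P ts) = Pred P (map (subst_trm \<theta>) ts)"
| "subst_atom \<theta> (Equ s t) = Equ (subst_trm \<theta> s) (subst_trm \<theta> t)"

fun subst_fm :: "(nat \<Rightarrow> 'f trm) \<Rightarrow> ('f, 'p) fm \<Rightarrow> ('f, 'p) fm" where
  "subst_fm \<theta> (At a) = At (subst_atom \<theta> a)"
| "subst_fm \<theta> Bot = Bot"
| "subst_fm \<theta> (Neg F) = Neg (subst_fm \<theta> F)"
| "subst_fm \<theta> (Conj F G) = Conj (subst_fm \<theta> F) (subst_fm \<theta> G)"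
| "subst_fm \<theta> (Disj F G) = Disj (subst_fm \<theta> F) (subst_fm \<theta> G)"
| "subst_fm \<theta> (Imp F G) = Imp (subst_fm \<theta> F) (subst_fm \<theta> G)"

definition vsub :: "'f trm list \<Rightarrow> nat \<Rightarrow> 'f trm" where
  "vsub ts j = (if j < length ts then ts ! j else Var j)"

text \<open>Since only quantifier-free sequents (with finitely many terms) are ever
  evaluated, validity over all such interpretations coincides with E-validity.\<close>

record 'a intp =
  fint :: "'a \<Rightarrow> nat list \<Rightarrow> nat"

fun eval_trm :: "('f \<Rightarrow> nat list \<Rightarrow> nat) \<Rightarrow> (nat \<Rightarrow> nat) \<Rightarrow> 'f trm \<Rightarrow> nat" where
  "eval_trm fI \<sigma> (Var j) = \<sigma> j"
| "eval_trm fI \<sigma> (Fn f ts) = fI f (map (eval_trm fI \<sigma>) ts)"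

fun holds_atom :: "('f \<Rightarrow> nat list \<Rightarrow> nat) \<Rightarrow> ('p \<Rightarrow> nat list \<Rightarrow> bool) \<Rightarrow> (nat \<Rightarrow> nat)
    \<Rightarrow> ('f, 'p) atom \<Rightarrow> bool" where
  "holds_atom fI pI \<sigma> (Pred P ts) = pI P (map (eval_trm fI \<sigma>) ts)"
| "holds_atom fI pI \<sigma> (Equ s t) = (eval_trm fI \<sigma> s = eval_trm fI \<sigma> t)"

fun holds :: "('f \<Rightarrow> nat list \<Rightarrow> nat) \<Rightarrow> ('p \<Rightarrow> nat list \<Rightarrow> bool) \<Rightarrow> (nat \<Rightarrow> nat)
    \<Rightarrow> ('f, 'p) fm \<Rightarrow> bool" where
  "holds fI pI \<sigma> (At a) = holds_atom fI pI \<sigma> a"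
| "holds fI pI \<sigma> Bot = False"
| "holds fI pI \<sigma> (Neg F) = (\<not> holds fI pI \<sigma> F)"
| "holds fI pI \<sigma> (Conj F G) = (holds fI pI \<sigma> F \<and> holds fI pI \<sigma> G)"
| "holds fI pI \<sigma> (Disj F G) = (holds fI pI \<sigma> F \<or> holds fI pI \<sigma> G)"
| "holds fI pI \<sigma> (Imp F G) = (holds fI pI \<sigma> F \<longrightarrow> holds fI pI \<sigma> G)"

text \<open>A quantifier-free sequent Gamma |- Delta is E-valid (a quasi-tautology)
  iff its universal closure is valid in every structure with equality.\<close>
definition quasi_taut :: "('f, 'p) fm set \<Rightarrow> ('f, 'p) fm set \<Rightarrow> bool" where
  "quasi_taut \<Gamma> \<Delta> \<longleftrightarrow> finite \<Gamma> \<and> finite \<Delta> \<and>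
     (\<forall>fI pI \<sigma>. (\<forall>F\<in>\<Gamma>. holds fI pI \<sigma> F) \<longrightarrow> (\<exists>G\<in>\<Delta>. holds fI pI \<sigma> G))"

section \<open>Sigma_1-sequents, Herbrand structures, decompositions\<close>

text \<open>A Sigma_1-sequent is given by a list S of pairs (k_i, F_i), i < q = length S, and
  the number p of antecedent formulas: entries i < p are the formulas forall x_i F_i of
  the antecedent, entries p <= i < q the formulas exists x_i F_i of the succedent.\<close>

definition sigma1_seq :: "(nat \<times> ('f, 'p) fm) list \<Rightarrow> nat \<Rightarrow> bool" where
  "sigma1_seq S p \<longleftrightarrow> p \<le> length S \<and> (\<forall>(k, F)\<in>set S. fv_fm F \<subseteq> {..<k})"

definition inst :: "(nat \<times> ('f, 'p) fm) list \<Rightarrow> nat \<Rightarrow> 'f trm list set \<Rightarrow> ('f, 'p) fm set" where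
  "inst S i T = (if fst (S ! i) > 0 then (\<lambda>t. subst_fm (vsub t) (snd (S ! i))) ` T
                 else {snd (S ! i)})"

definition herbrand_structure ::
    "(nat \<times> ('f, 'p) fm) list \<Rightarrow> nat \<Rightarrow> 'f trm list set list \<Rightarrow> bool" where
  "herbrand_structure S p H \<longleftrightarrow> length H = length S \<and>
     (\<forall>i < length S. finite (H ! i) \<and>
        (\<forall>t\<in>H ! i. length t = fst (S ! i) \<and> (\<forall>u\<in>set t. ground u))) \<and>
     quasi_taut (\<Union>i<p. inst S i (H ! i)) (\<Union>i\<in>{p..<length S}. inst S i (H ! i))"

definition decomposition ::
    "(nat \<times> ('f, 'p) fm) list \<Rightarrow> 'f trm list set list \<Rightarrow> nat \<Rightarrow> 'f trm list set list
     \<Rightarrow> 'f trm list set \<Rightarrow> bool" where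
  "decomposition S H n U W \<longleftrightarrow> length U = length S \<and>
     (\<forall>i < length S. finite (U ! i) \<and>
        (\<forall>u\<in>U ! i. length u = fst (S ! i) \<and> (\<forall>s\<in>set u. fv_trm s \<subseteq> {..<n}))) \<and>
     finite W \<and> (\<forall>w\<in>W. length w = n \<and> (\<forall>s\<in>set w. ground s)) \<and>
     (\<forall>i < length S. fst (S ! i) > 0 \<longrightarrow>
        H ! i = {map (subst_trm (vsub w)) u | u w. u \<in> U ! i \<and> w \<in> W})"

definition Gam :: "(nat \<times> ('f, 'p) fm) list \<Rightarrow> nat \<Rightarrow> 'f trm list set list \<Rightarrow> ('f, 'p) fm set" where
  "Gam S p U = (\<Union>i<p. inst S i (U ! i))"

definition Del :: "(nat \<times> ('f, 'p) fm) list \<Rightarrow> nat \<Rightarrow> 'f trm list set list \<Rightarrow> ('f, 'p) fm set" where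
  "Del S p U = (\<Union>i\<in>{p..<length S}. inst S i (U ! i))"

text \<open>A literal is a sign (True = positive) and an atom; a clause is a finite set of
  literals; a CNF is a finite set of clauses.\<close>

type_synonym ('f, 'p) lit = "bool \<times> ('f, 'p) atom"
type_synonym ('f, 'p) clause = "('f, 'p) lit set"
type_synonym ('f, 'p) cnf = "('f, 'p) clause set"

definition is_cnf :: "('f, 'p) cnf \<Rightarrow> bool" where
  "is_cnf A \<longleftrightarrow> finite A \<and> (\<forall>C\<in>A. finite C)"

definition fv_clause :: "('f, 'p) clause \<Rightarrow> nat set" where
  "fv_clause C = (\<Union>(b, a)\<in>C. fv_atom a)"

definition fv_cnf :: "('f, 'p) cnf \<Rightarrow> nat set" where
  "fv_cnf A = (\<Union>C\<in>A. fv_clause C)"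

definition subst_cnf :: "(nat \<Rightarrow> 'f trm) \<Rightarrow> ('f, 'p) cnf \<Rightarrow> ('f, 'p) cnf" where
  "subst_cnf \<theta> A = (\<lambda>C. (\<lambda>(b, a). (b, subst_atom \<theta> a)) ` C) ` A"

definition holds_lit :: "('f \<Rightarrow> nat list \<Rightarrow> nat) \<Rightarrow> ('p \<Rightarrow> nat list \<Rightarrow> bool) \<Rightarrow> (nat \<Rightarrow> nat)
    \<Rightarrow> ('f, 'p) lit \<Rightarrow> bool" where
  "holds_lit fI pI \<sigma> L = (holds_atom fI pI \<sigma> (snd L) = fst L)"

definition holds_cnf :: "('f \<Rightarrow> nat list \<Rightarrow> nat) \<Rightarrow> ('p \<Rightarrow> nat list \<Rightarrow> bool) \<Rightarrow> (nat \<Rightarrow> nat)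
    \<Rightarrow> ('f, 'p) cnf \<Rightarrow> bool" where
  "holds_cnf fI pI \<sigma> A = (\<forall>C\<in>A. \<exists>L\<in>C. holds_lit fI pI \<sigma> L)"

text \<open>[X \ lambda alpha. A] is a solution of
  S~ :  X alpha -> /\_{w in W} X w, Gamma |- Delta
  iff A has free variables among alpha_1..alpha_n and
  A -> /\_{w in W} A[alpha \ w], Gamma |- Delta is a quasi-tautology.\<close>
definition is_solution ::
    "nat \<Rightarrow> 'f trm list set \<Rightarrow> ('f, 'p) fm set \<Rightarrow> ('f, 'p) fm set \<Rightarrow> ('f, 'p) cnf \<Rightarrow> bool" where
  "is_solution n W \<Gamma> \<Delta> A \<longleftrightarrow> is_cnf A \<and> fv_cnf A \<subseteq> {..<n} \<and> finite W \<and> finite \<Gamma> \<and> finite \<Delta> \<and>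
     (\<forall>fI pI \<sigma>. ((holds_cnf fI pI \<sigma> A \<longrightarrow> (\<forall>w\<in>W. holds_cnf fI pI \<sigma> (subst_cnf (vsub w) A)))
                   \<and> (\<forall>F\<in>\<Gamma>. holds fI pI \<sigma> F))
                \<longrightarrow> (\<exists>G\<in>\<Delta>. holds fI pI \<sigma> G))"

section \<open>Forgetful reasoning\<close>

text \<open>Propositional resolvents (the alpha_j treated as constants: no unification).\<close>
definition res :: "('f, 'p) clause \<Rightarrow> ('f, 'p) clause \<Rightarrow> ('f, 'p) clause set" where
  "res C1 C2 = {(C1 - {(b, a)}) \<union> (C2 - {(\<not> b, a)}) | b a. (b, a) \<in> C1 \<and> (\<not> b, a) \<in> C2}"

inductive repl :: "'f trm \<Rightarrow> 'f trm \<Rightarrow> 'f trm \<Rightarrow> 'f trm \<Rightarrow> bool" where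
  here: "repl s t s t"
| arg: "i < length us \<Longrightarrow> repl s t (us ! i) u' \<Longrightarrow> repl s t (Fn f us) (Fn f (us[i := u']))"

inductive repl_atom :: "'f trm \<Rightarrow> 'f trm \<Rightarrow> ('f, 'p) atom \<Rightarrow> ('f, 'p) atom \<Rightarrow> bool" where
  pred: "i < length us \<Longrightarrow> repl s t (us ! i) u' \<Longrightarrow> repl_atom s t (Pred P us) (Pred P (us[i := u']))"
| eql: "repl s t a a' \<Longrightarrow> repl_atom s t (Equ a b) (Equ a' b)"
| eqr: "repl s t b b' \<Longrightarrow> repl_atom s t (Equ a b) (Equ a b')"

definition para :: "('f, 'p) clause \<Rightarrow> ('f, 'p) clause \<Rightarrow> ('f, 'p) clause set" where
  "para C1 C2 = {(C1 - {(True, Equ s t)}) \<union> (C2 - {(b, a)}) \<union> {(b, a')} | s t b a a'.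
      (True, Equ s t) \<in> C1 \<and> (b, a) \<in> C2 \<and> (repl_atom s t a a' \<or> repl_atom t s a a')}"

definition forget :: "('f, 'p) cnf \<Rightarrow> ('f, 'p) cnf set" where
  "forget A = {insert C (A - {Cj, Cm}) | Cj Cm C.
      Cj \<in> A \<and> Cm \<in> A \<and> Cj \<noteq> Cm \<and> C \<in> res Cj Cm \<union> para Cj Cm}"

definition prune :: "nat \<Rightarrow> ('f, 'p) cnf \<Rightarrow> ('f, 'p) cnf" where
  "prune n A = {C \<in> A. \<exists>j<n. j \<in> fv_clause C}"

definition sf_test ::
    "'f trm list set \<Rightarrow> ('f, 'p) fm set \<Rightarrow> ('f, 'p) fm set \<Rightarrow> ('f, 'p) cnf \<Rightarrow> bool" where
  "sf_test W \<Gamma> \<Delta> B \<longleftrightarrow> finite W \<and> finite \<Gamma> \<and> finite \<Delta> \<and>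
     (\<forall>fI pI \<sigma>. ((\<forall>w\<in>W. holds_cnf fI pI \<sigma> (subst_cnf (vsub w) B)) \<and> (\<forall>F\<in>\<Gamma>. holds fI pI \<sigma> F))
                \<longrightarrow> (\<exists>G\<in>\<Delta>. holds fI pI \<sigma> G))"

text \<open>Termination of SF on input A: the loop of step (iii) ranges over a finite set
  and every recursive call terminates (inductively, i.e. there is no infinite
  chain of recursive calls).\<close>
inductive sf_terminates ::
    "nat \<Rightarrow> 'f trm list set \<Rightarrow> ('f, 'p) fm set \<Rightarrow> ('f, 'p) fm set \<Rightarrow> ('f, 'p) cnf \<Rightarrow> bool"
  for n W \<Gamma> \<Delta> where
  "finite (forget (prune n A)) \<Longrightarrow>
   (\<And>B. B \<in> forget (prune n A) \<Longrightarrow> sf_test W \<Gamma> \<Delta> B \<Longrightarrow> sf_terminates n W \<Gamma> \<Delta> B) \<Longrightarrow>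
   sf_terminates n W \<Gamma> \<Delta> A"

text \<open>sf_out n W Gamma Delta A B  iff  B is in SF(A).\<close>
inductive sf_out ::
    "nat \<Rightarrow> 'f trm list set \<Rightarrow> ('f, 'p) fm set \<Rightarrow> ('f, 'p) fm set \<Rightarrow> ('f, 'p) cnf \<Rightarrow> ('f, 'p) cnf \<Rightarrow> bool"
  for n W \<Gamma> \<Delta> where
  self: "sf_out n W \<Gamma> \<Delta> A (prune n A)"
| rec: "B \<in> forget (prune n A) \<Longrightarrow> sf_test W \<Gamma> \<Delta> B \<Longrightarrow> sf_out n W \<Gamma> \<Delta> B C \<Longrightarrow>
        sf_out n W \<Gamma> \<Delta> A C"

end

theory Submission
  imports Defs
begin

lemma repl_eval:
  "repl s t u u' \<Longrightarrow> eval_trm fI \<sigma> s = eval_trm fI \<sigma> t \<Longrightarrow> eval_trm fI \<sigma> u = eval_trm fI \<sigma> u'"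
proof (induction rule: repl.induct)
  case here then show ?case by simp
next
  case (arg i us s t u' f)
  then have e: "eval_trm fI \<sigma> (us ! i) = eval_trm fI \<sigma> u'" by simp
  have "map (eval_trm fI \<sigma>) (us[i := u']) = (map (eval_trm fI \<sigma>) us)[i := eval_trm fI \<sigma> u']"
    by (rule map_update)
  also have "\<dots> = (map (eval_trm fI \<sigma>) us)[i := (map (eval_trm fI \<sigma>) us) ! i]"
    using e arg by simp
  also have "\<dots> = map (eval_trm fI \<sigma>) us" by (rule list_update_id)
  finally have "map (eval_trm fI \<sigma>) (us[i := u']) = map (eval_trm fI \<sigma>) us" .
  then show ?case by simp
qed

lemma repl_fv: "repl s t u u' \<Longrightarrow> fv_trm u' \<subseteq> fv_trm u \<union> fv_trm t"
proof (induction rule: repl.induct)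
  case here then show ?case by simp
next
  case (arg i us s t u' f)
  have "set (us[i := u']) \<subseteq> insert u' (set us)" by (rule set_update_subset_insert)
  moreover have "us ! i \<in> set us" using arg by simp
  ultimately have "(\<Union>x\<in>set (us[i := u']). fv_trm x) \<subseteq> fv_trm u' \<union> (\<Union>x\<in>set us. fv_trm x)" by blast
  also have "\<dots> \<subseteq> fv_trm (us ! i) \<union> fv_trm t \<union> (\<Union>x\<in>set us. fv_trm x)" using arg by blast
  also have "\<dots> \<subseteq> (\<Union>x\<in>set us. fv_trm x) \<union> fv_trm t" using \<open>us ! i \<in> set us\<close> by blast
  finally show ?case by simp
qed

lemma repl_atom_holds:
  "repl_atom s t a a' \<Longrightarrow> eval_trm fI \<sigma> s = eval_trm fI \<sigma> t \<Longrightarrow> holds_atom fI pI \<sigma> a = holds_atom fI pI \<sigma> a'"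
proof (induction rule: repl_atom.induct)
  case (pred i us s t u' P)
  then have "eval_trm fI \<sigma> (us ! i) = eval_trm fI \<sigma> u'" using repl_eval by blast
  then have e: "eval_trm fI \<sigma> (us ! i) = eval_trm fI \<sigma> u'" by simp
  have "map (eval_trm fI \<sigma>) (us[i := u']) = (map (eval_trm fI \<sigma>) us)[i := eval_trm fI \<sigma> u']"
    by (rule map_update)
  also have "\<dots> = (map (eval_trm fI \<sigma>) us)[i := (map (eval_trm fI \<sigma>) us) ! i]"
    using e pred by simp
  also have "\<dots> = map (eval_trm fI \<sigma>) us" by (rule list_update_id)
  finally have "map (eval_trm fI \<sigma>) (us[i := u']) = map (eval_trm fI \<sigma>) us" .
  then show ?case by simp
next
  case (eql s t a a' b)
  then have "eval_trm fI \<sigma> a = eval_trm fI \<sigma> a'" using repl_eval by blast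
  then show ?case by simp
next
  case (eqr s t b b' a)
  then have "eval_trm fI \<sigma> b = eval_trm fI \<sigma> b'" using repl_eval by blast
  then show ?case by simp
qed

lemma repl_atom_fv: "repl_atom s t a a' \<Longrightarrow> fv_atom a' \<subseteq> fv_atom a \<union> fv_trm t"
proof (induction rule: repl_atom.induct)
  case (pred i us s t u' P)
  have "set (us[i := u']) \<subseteq> insert u' (set us)" by (rule set_update_subset_insert)
  moreover have "us ! i \<in> set us" using pred by simp
  moreover have "fv_trm u' \<subseteq> fv_trm (us ! i) \<union> fv_trm t" using pred repl_fv by blast
  ultimately show ?case by auto
next
  case (eql s t a a' b)
  then have "fv_trm a' \<subseteq> fv_trm a \<union> fv_trm t" using repl_fv by blast
  then show ?case by auto
next
  case (eqr s t b b' a)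
  then have "fv_trm b' \<subseteq> fv_trm b \<union> fv_trm t" using repl_fv by blast
  then show ?case by auto
qed

lemma repl_finite: "finite {u'. repl s t u u'}"
proof (induction u)
  case (Var x)
  have "{u'. repl s t (Var x) u'} \<subseteq> {t}" by (auto elim: repl.cases)
  then show ?case by (rule finite_subset) simp
next
  case (Fn f us)
  have "{u'. repl s t (Fn f us) u'} \<subseteq> {t} \<union>
     (\<Union>i<length us. (\<lambda>v. Fn f (us[i := v])) ` {v. repl s t (us ! i) v})"
  proof
    fix x assume "x \<in> {u'. repl s t (Fn f us) u'}"
    then have "repl s t (Fn f us) x" by simp
    then show "x \<in> {t} \<union> (\<Union>i<length us. (\<lambda>v. Fn f (us[i := v])) ` {v. repl s t (us ! i) v})"
      by (cases rule: repl.cases) auto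
  qed
  moreover have "finite ({t} \<union> (\<Union>i<length us. (\<lambda>v. Fn f (us[i := v])) ` {v. repl s t (us ! i) v}))"
    using Fn by auto
  ultimately show ?case by (rule finite_subset)
qed

lemma repl_atom_finite: "finite {a'. repl_atom s t a a'}"
proof (cases a)
  case (Pred P us)
  have "{a'. repl_atom s t a a'} \<subseteq>
     (\<Union>i<length us. (\<lambda>v. Pred P (us[i := v])) ` {v. repl s t (us ! i) v})"
  proof
    fix x assume "x \<in> {a'. repl_atom s t a a'}"
    then have "repl_atom s t (Pred P us) x" using Pred by simp
    then show "x \<in> (\<Union>i<length us. (\<lambda>v. Pred P (us[i := v])) ` {v. repl s t (us ! i) v})"
      by (cases rule: repl_atom.cases) auto
  qed
  moreover have "finite (\<Union>i<length us. (\<lambda>v. Pred P (us[i := v])) ` {v. repl s t (us ! i) v})"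
    using repl_finite by auto
  ultimately show ?thesis by (rule finite_subset)
next
  case (Equ l r)
  have "{a'. repl_atom s t a a'} \<subseteq>
     (\<lambda>v. Equ v r) ` {v. repl s t l v} \<union> (\<lambda>v. Equ l v) ` {v. repl s t r v}"
    using Equ by (auto elim: repl_atom.cases)
  moreover have "finite ((\<lambda>v. Equ v r) ` {v. repl s t l v} \<union> (\<lambda>v. Equ l v) ` {v. repl s t r v})"
    using repl_finite by blast
  ultimately show ?thesis by (rule finite_subset)
qed

lemma res_finite: "finite C1 \<Longrightarrow> finite (res C1 C2)"
proof -
  assume f: "finite C1"
  have sub: "res C1 C2 \<subseteq> (\<lambda>(b, a). (C1 - {(b, a)}) \<union> (C2 - {(\<not> b, a)})) ` C1"
  proof
    fix X assume "X \<in> res C1 C2"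
    then obtain b a where X: "X = (C1 - {(b, a)}) \<union> (C2 - {(\<not> b, a)})" "(b, a) \<in> C1"
      unfolding res_def by blast
    show "X \<in> (\<lambda>(b, a). (C1 - {(b, a)}) \<union> (C2 - {(\<not> b, a)})) ` C1"
      by (rule image_eqI[where x="(b, a)"]) (use X in simp_all)
  qed
  show ?thesis using finite_subset[OF sub finite_imageI[OF f]] .
qed

lemma para_finite: "finite C1 \<Longrightarrow> finite C2 \<Longrightarrow> finite (para C1 C2)"
proof -
  assume f1: "finite C1" and f2: "finite C2"
  let ?E = "{(s, t). (True, Equ s t) \<in> C1}"
  have fE: "finite ?E"
  proof -
    have "?E \<subseteq> (\<lambda>L. case snd L of Equ s t \<Rightarrow> (s, t) | _ \<Rightarrow> undefined) ` C1"
    proof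
      fix x assume "x \<in> ?E"
      then obtain s t where x: "x = (s, t)" "(True, Equ s t) \<in> C1" by blast
      show "x \<in> (\<lambda>L. case snd L of Equ s t \<Rightarrow> (s, t) | _ \<Rightarrow> undefined) ` C1"
        by (rule image_eqI[where x="(True, Equ s t)"]) (use x in simp_all)
    qed
    then show ?thesis using finite_subset finite_imageI[OF f1] by blast
  qed
  let ?T = "SIGMA st:?E. SIGMA L:C2. {a'. repl_atom (fst st) (snd st) (snd L) a' \<or> repl_atom (snd st) (fst st) (snd L) a'}"
  have fT: "finite ?T"
    apply (intro finite_SigmaI fE f2)
    apply (simp only: Collect_disj_eq)
    apply (intro finite_UnI repl_atom_finite)
    done
  have "para C1 C2 \<subseteq> (\<lambda>(st, L, a'). (C1 - {(True, Equ (fst st) (snd st))}) \<union> (C2 - {L}) \<union> {(fst L, a')}) ` ?T"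
  proof
    fix X assume "X \<in> para C1 C2"
    then obtain s t b a a' where X: "X = (C1 - {(True, Equ s t)}) \<union> (C2 - {(b, a)}) \<union> {(b, a')}"
      and i: "(True, Equ s t) \<in> C1" "(b, a) \<in> C2" and r: "repl_atom s t a a' \<or> repl_atom t s a a'"
      unfolding para_def by blast
    show "X \<in> (\<lambda>(st, L, a'). (C1 - {(True, Equ (fst st) (snd st))}) \<union> (C2 - {L}) \<union> {(fst L, a')}) ` ?T"
      by (rule image_eqI[where x="((s, t), (b, a), a')"]) (use X i r in auto)
  qed
  then show ?thesis using finite_subset finite_imageI[OF fT] by blast
qed

lemma forget_finite:
  assumes "is_cnf A" shows "finite (forget A)"
proof -
  let ?T = "SIGMA Cj:A. SIGMA Cm:A. res Cj Cm \<union> para Cj Cm"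
  have fA: "finite A" and fC: "\<And>C. C \<in> A \<Longrightarrow> finite C" using assms unfolding is_cnf_def by auto
  have h: "\<And>Cj Cm. Cj \<in> A \<Longrightarrow> Cm \<in> A \<Longrightarrow> finite (res Cj Cm \<union> para Cj Cm)"
    using fC res_finite para_finite by blast
  have fin: "finite ?T"
    using fA h by (intro finite_SigmaI) auto
  have sub: "forget A \<subseteq> (\<lambda>(Cj, Cm, C). insert C (A - {Cj, Cm})) ` ?T"
  proof
    fix X assume "X \<in> forget A"
    then obtain Cj Cm C where X: "X = insert C (A - {Cj, Cm})" "Cj \<in> A" "Cm \<in> A"
      "C \<in> res Cj Cm \<union> para Cj Cm" unfolding forget_def by blast
    show "X \<in> (\<lambda>(Cj, Cm, C). insert C (A - {Cj, Cm})) ` ?T"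
      by (rule image_eqI[where x="(Cj, Cm, C)"]) (use X in simp_all)
  qed
  show ?thesis using finite_subset[OF sub finite_imageI[OF fin]] .
qed

lemma res_clause: "finite C1 \<Longrightarrow> finite C2 \<Longrightarrow> C \<in> res C1 C2 \<Longrightarrow>
   finite C \<and> fv_clause C \<subseteq> fv_clause C1 \<union> fv_clause C2"
  unfolding res_def fv_clause_def by auto

lemma para_clause: "finite C1 \<Longrightarrow> finite C2 \<Longrightarrow> C \<in> para C1 C2 \<Longrightarrow>
   finite C \<and> fv_clause C \<subseteq> fv_clause C1 \<union> fv_clause C2"
proof -
  assume f: "finite C1" "finite C2" and c: "C \<in> para C1 C2"
  then obtain s t b a a' where C: "C = (C1 - {(True, Equ s t)}) \<union> (C2 - {(b, a)}) \<union> {(b, a')}"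
    and i: "(True, Equ s t) \<in> C1" "(b, a) \<in> C2" and r: "repl_atom s t a a' \<or> repl_atom t s a a'"
    unfolding para_def by blast
  have "fv_atom a' \<subseteq> fv_atom a \<union> fv_trm s \<union> fv_trm t" using r repl_atom_fv by blast
  moreover have "fv_atom a \<subseteq> fv_clause C2" using i unfolding fv_clause_def by auto
  moreover have "fv_trm s \<union> fv_trm t \<subseteq> fv_clause C1" using i unfolding fv_clause_def by force
  ultimately show ?thesis using f C unfolding fv_clause_def by auto
qed

lemma res_sound: "C \<in> res C1 C2 \<Longrightarrow> \<exists>L\<in>C1. holds_lit fI pI \<sigma> L \<Longrightarrow> \<exists>L\<in>C2. holds_lit fI pI \<sigma> L
  \<Longrightarrow> \<exists>L\<in>C. holds_lit fI pI \<sigma> L"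
proof -
  assume c: "C \<in> res C1 C2" and h1: "\<exists>L\<in>C1. holds_lit fI pI \<sigma> L" and h2: "\<exists>L\<in>C2. holds_lit fI pI \<sigma> L"
  then obtain b a where C: "C = (C1 - {(b, a)}) \<union> (C2 - {(\<not> b, a)})"
    unfolding res_def by blast
  obtain L1 where L1: "L1 \<in> C1" "holds_lit fI pI \<sigma> L1" using h1 by blast
  obtain L2 where L2: "L2 \<in> C2" "holds_lit fI pI \<sigma> L2" using h2 by blast
  show ?thesis
  proof (cases "L1 = (b, a)")
    case False then show ?thesis using L1 C by blast
  next
    case T: True
    show ?thesis
    proof (cases "L2 = (\<not> b, a)")
      case False then show ?thesis using L2 C by blast
    next
      case True
      then show ?thesis using T L1 L2 by (simp add: holds_lit_def)
    qed
  qed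
qed

lemma para_sound: "C \<in> para C1 C2 \<Longrightarrow> \<exists>L\<in>C1. holds_lit fI pI \<sigma> L \<Longrightarrow> \<exists>L\<in>C2. holds_lit fI pI \<sigma> L
  \<Longrightarrow> \<exists>L\<in>C. holds_lit fI pI \<sigma> L"
proof -
  assume c: "C \<in> para C1 C2" and h1: "\<exists>L\<in>C1. holds_lit fI pI \<sigma> L" and h2: "\<exists>L\<in>C2. holds_lit fI pI \<sigma> L"
  then obtain s t b a a' where C: "C = (C1 - {(True, Equ s t)}) \<union> (C2 - {(b, a)}) \<union> {(b, a')}"
    and i: "(True, Equ s t) \<in> C1" "(b, a) \<in> C2" and r: "repl_atom s t a a' \<or> repl_atom t s a a'"
    unfolding para_def by blast
  obtain L1 where L1: "L1 \<in> C1" "holds_lit fI pI \<sigma> L1" using h1 by blast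
  obtain L2 where L2: "L2 \<in> C2" "holds_lit fI pI \<sigma> L2" using h2 by blast
  show ?thesis
  proof (cases "L1 = (True, Equ s t)")
    case False then show ?thesis using L1 C by auto
  next
    case T1: True
    then have e: "eval_trm fI \<sigma> s = eval_trm fI \<sigma> t" using L1 by (simp add: holds_lit_def)
    show ?thesis
    proof (cases "L2 = (b, a)")
      case False then show ?thesis using L2 C by auto
    next
      case True
      have "holds_atom fI pI \<sigma> a = holds_atom fI pI \<sigma> a'"
        using r e repl_atom_holds[of s t a a' fI \<sigma> pI] repl_atom_holds[of t s a a' fI \<sigma> pI] by auto
      then have "holds_lit fI pI \<sigma> (b, a')" using L2 True by (simp add: holds_lit_def)
      then show ?thesis using C by auto
    qed
  qed
qed

lemma forget_props:
  assumes "is_cnf A" "B \<in> forget A"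
  shows "is_cnf B \<and> fv_cnf B \<subseteq> fv_cnf A \<and> card B < card A \<and>
         (\<forall>fI pI \<sigma>. holds_cnf fI pI \<sigma> A \<longrightarrow> holds_cnf fI pI \<sigma> B)"
proof -
  obtain Cj Cm C where B: "B = insert C (A - {Cj, Cm})" and mem: "Cj \<in> A" "Cm \<in> A" "Cj \<noteq> Cm"
    and c: "C \<in> res Cj Cm \<union> para Cj Cm"
    using assms(2) unfolding forget_def by blast
  have fA: "finite A" and fc: "\<forall>C\<in>A. finite C" using assms(1) unfolding is_cnf_def by auto
  have fj: "finite Cj" "finite Cm" using fc mem by auto
  have cC: "finite C \<and> fv_clause C \<subseteq> fv_clause Cj \<union> fv_clause Cm"
  proof (cases "C \<in> res Cj Cm")
    case True then show ?thesis by (rule res_clause[OF fj])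
  next
    case False then have "C \<in> para Cj Cm" using c by simp
    then show ?thesis by (rule para_clause[OF fj])
  qed
  have sB: "B \<subseteq> insert C A" using B by blast
  have "is_cnf B" unfolding is_cnf_def
  proof
    show "finite B" using B fA by simp
    show "\<forall>C'\<in>B. finite C'" using sB fc cC by blast
  qed
  moreover have "fv_cnf B \<subseteq> fv_cnf A"
  proof
    fix x assume "x \<in> fv_cnf B"
    then obtain C' where C': "C' \<in> B" "x \<in> fv_clause C'" unfolding fv_cnf_def by blast
    show "x \<in> fv_cnf A"
    proof (cases "C' = C")
      case True
      then have "x \<in> fv_clause Cj \<or> x \<in> fv_clause Cm" using C' cC by blast
      then show ?thesis using mem unfolding fv_cnf_def by blast
    next
      case False then have "C' \<in> A" using C' B by blast
      then show ?thesis using C' unfolding fv_cnf_def by blast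
    qed
  qed
  moreover have "card B < card A"
  proof -
    have s2: "{Cj, Cm} \<subseteq> A" using mem by blast
    have c2: "card {Cj, Cm} = 2" using mem by simp
    have "card B \<le> Suc (card (A - {Cj, Cm}))" unfolding B using fA by (simp add: card_insert_if)
    moreover have "card (A - {Cj, Cm}) = card A - 2"
      using card_Diff_subset[OF _ s2] c2 by simp
    moreover have "card A \<ge> 2" using card_mono[OF fA s2] c2 by simp
    ultimately show ?thesis by linarith
  qed
  moreover have "\<forall>fI pI \<sigma>. holds_cnf fI pI \<sigma> A \<longrightarrow> holds_cnf fI pI \<sigma> B"
  proof (intro allI impI)
    fix fI pI \<sigma> assume h: "holds_cnf fI pI \<sigma> A"
    have "\<exists>L\<in>Cj. holds_lit fI pI \<sigma> L" "\<exists>L\<in>Cm. holds_lit fI pI \<sigma> L"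
      using h mem unfolding holds_cnf_def by auto
    then have "\<exists>L\<in>C. holds_lit fI pI \<sigma> L" using c res_sound para_sound by blast
    then show "holds_cnf fI pI \<sigma> B" using h B unfolding holds_cnf_def by auto
  qed
  ultimately show ?thesis by blast
qed

lemma prune_cnf: "is_cnf A \<Longrightarrow> is_cnf (prune n A)"
  unfolding is_cnf_def prune_def by auto

lemma terminates: "is_cnf A \<Longrightarrow> sf_terminates n W \<Gamma> \<Delta> A"
proof (induction "card A" arbitrary: A rule: less_induct)
  case less
  have P: "is_cnf (prune n A)" using less prune_cnf by blast
  have le: "card (prune n A) \<le> card A"
    using less unfolding is_cnf_def prune_def by (intro card_mono) auto
  show ?case
  proof (rule sf_terminates.intros)
    show "finite (forget (prune n A))" using P forget_finite by blast
  next
    fix B assume "B \<in> forget (prune n A)"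
    then have "is_cnf B" "card B < card A" using forget_props[OF P] le by fastforce+
    then show "sf_terminates n W \<Gamma> \<Delta> B" using less by blast
  qed
qed

lemma sol_char: "is_solution n W \<Gamma> \<Delta> A \<longleftrightarrow> is_cnf A \<and> fv_cnf A \<subseteq> {..<n} \<and> finite W \<and> finite \<Gamma> \<and> finite \<Delta> \<and>
   (\<forall>fI pI \<sigma>. (\<forall>F\<in>\<Gamma>. holds fI pI \<sigma> F) \<longrightarrow> \<not> holds_cnf fI pI \<sigma> A \<longrightarrow> (\<exists>G\<in>\<Delta>. holds fI pI \<sigma> G)) \<and>
   sf_test W \<Gamma> \<Delta> A"
  unfolding is_solution_def sf_test_def by blast

lemma subst_trm_ground: "fv_trm t = {} \<Longrightarrow> subst_trm \<theta> t = t"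
  by (induction t) (auto intro: map_idI)

lemma subst_atom_ground: "fv_atom a = {} \<Longrightarrow> subst_atom \<theta> a = a"
  by (cases a) (auto intro: map_idI subst_trm_ground)

lemma holds_subst_cnf: "holds_cnf fI pI \<sigma> (subst_cnf \<theta> A) \<longleftrightarrow>
   (\<forall>C\<in>A. \<exists>(b, a)\<in>C. holds_lit fI pI \<sigma> (b, subst_atom \<theta> a))"
  unfolding holds_cnf_def subst_cnf_def by fastforce

lemma prune_sol:
  assumes "is_solution n W \<Gamma> \<Delta> A" shows "is_solution n W \<Gamma> \<Delta> (prune n A)"
proof -
  have A: "is_cnf A" "fv_cnf A \<subseteq> {..<n}" "finite W" "finite \<Gamma>" "finite \<Delta>"
    and c1: "\<forall>fI pI \<sigma>. (\<forall>F\<in>\<Gamma>. holds fI pI \<sigma> F) \<longrightarrow> \<not> holds_cnf fI pI \<sigma> A \<longrightarrow> (\<exists>G\<in>\<Delta>. holds fI pI \<sigma> G)"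
    and c2: "sf_test W \<Gamma> \<Delta> A"
    using assms unfolding sol_char by blast+
  have gr: "\<And>C b a. C \<in> A \<Longrightarrow> C \<notin> prune n A \<Longrightarrow> (b, a) \<in> C \<Longrightarrow> fv_atom a = {}"
  proof -
    fix C b a
    assume m: "C \<in> A" "C \<notin> prune n A" "(b, a) \<in> C"
    have 1: "fv_atom a \<subseteq> fv_clause C" using m(3) unfolding fv_clause_def by force
    have "fv_clause C \<subseteq> fv_cnf A" using m(1) unfolding fv_cnf_def by blast
    then have 2: "fv_clause C \<subseteq> {..<n}" using A(2) by blast
    have 3: "\<not> (\<exists>j<n. j \<in> fv_clause C)" using m(1,2) unfolding prune_def by simp
    show "fv_atom a = {}" using 1 2 3 by blast
  qed
  have P1: "is_cnf (prune n A)" using A prune_cnf by blast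
  have P2: "fv_cnf (prune n A) \<subseteq> {..<n}" using A(2) unfolding prune_def fv_cnf_def by blast
  have P3: "\<forall>fI pI \<sigma>. (\<forall>F\<in>\<Gamma>. holds fI pI \<sigma> F) \<longrightarrow> \<not> holds_cnf fI pI \<sigma> (prune n A) \<longrightarrow> (\<exists>G\<in>\<Delta>. holds fI pI \<sigma> G)"
  proof (intro allI impI)
    fix fI pI \<sigma> assume g: "\<forall>F\<in>\<Gamma>. holds fI pI \<sigma> F" and ng: "\<not> holds_cnf fI pI \<sigma> (prune n A)"
    have "prune n A \<subseteq> A" unfolding prune_def by blast
    then have "\<not> holds_cnf fI pI \<sigma> A" using ng unfolding holds_cnf_def by blast
    then show "\<exists>G\<in>\<Delta>. holds fI pI \<sigma> G" using c1 g by blast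
  qed
  have P4: "sf_test W \<Gamma> \<Delta> (prune n A)"
    unfolding sf_test_def
  proof (intro conjI allI impI A)
    fix fI pI \<sigma>
    assume h: "(\<forall>w\<in>W. holds_cnf fI pI \<sigma> (subst_cnf (vsub w) (prune n A))) \<and> (\<forall>F\<in>\<Gamma>. holds fI pI \<sigma> F)"
    show "\<exists>G\<in>\<Delta>. holds fI pI \<sigma> G"
    proof (cases "holds_cnf fI pI \<sigma> A")
      case False then show ?thesis using c1 h by blast
    next
      case True
      have "\<forall>w\<in>W. holds_cnf fI pI \<sigma> (subst_cnf (vsub w) A)"
      proof
        fix w assume w: "w \<in> W"
        show "holds_cnf fI pI \<sigma> (subst_cnf (vsub w) A)"
          unfolding holds_subst_cnf
        proof
          fix C assume C: "C \<in> A"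
          show "\<exists>(b, a)\<in>C. holds_lit fI pI \<sigma> (b, subst_atom (vsub w) a)"
          proof (cases "C \<in> prune n A")
            case True
            from h w have "holds_cnf fI pI \<sigma> (subst_cnf (vsub w) (prune n A))" by blast
            then have "\<forall>C\<in>prune n A. \<exists>(b, a)\<in>C. holds_lit fI pI \<sigma> (b, subst_atom (vsub w) a)"
              by (simp only: holds_subst_cnf)
            then show ?thesis using True by blast
          next
            case False
            obtain L where L: "L \<in> C" "holds_lit fI pI \<sigma> L" using \<open>holds_cnf fI pI \<sigma> A\<close> C
              unfolding holds_cnf_def by blast
            obtain b a where ba: "L = (b, a)" by (cases L)
            have "fv_atom a = {}" using gr[OF C False] L(1) ba by blast
            then have "subst_atom (vsub w) a = a" by (rule subst_atom_ground)
            then have "holds_lit fI pI \<sigma> (b, subst_atom (vsub w) a)" using L(2) ba by simp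
            then show ?thesis using L(1) ba by blast
          qed
        qed
      qed
      then show ?thesis using c2 h unfolding sf_test_def by blast
    qed
  qed
  show ?thesis unfolding sol_char by (intro conjI P1 P2 P3 P4 A(3) A(4) A(5))
qed

lemma out_sol: "sf_out n W \<Gamma> \<Delta> A B \<Longrightarrow> is_solution n W \<Gamma> \<Delta> A \<Longrightarrow> is_solution n W \<Gamma> \<Delta> B"
proof (induction rule: sf_out.induct)
  case (self A) then show ?case using prune_sol by blast
next
  case (rec B A C)
  have P: "is_solution n W \<Gamma> \<Delta> (prune n A)" using rec prune_sol by blast
  then have Pc: "is_cnf (prune n A)" "fv_cnf (prune n A) \<subseteq> {..<n}" "finite W" "finite \<Gamma>" "finite \<Delta>"
    and c1: "\<forall>fI pI \<sigma>. (\<forall>F\<in>\<Gamma>. holds fI pI \<sigma> F) \<longrightarrow> \<not> holds_cnf fI pI \<sigma> (prune n A) \<longrightarrow> (\<exists>G\<in>\<Delta>. holds fI pI \<sigma> G)"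
    unfolding sol_char by blast+
  have F: "is_cnf B \<and> fv_cnf B \<subseteq> fv_cnf (prune n A) \<and>
         (\<forall>fI pI \<sigma>. holds_cnf fI pI \<sigma> (prune n A) \<longrightarrow> holds_cnf fI pI \<sigma> B)"
    using forget_props[OF Pc(1) rec.hyps(1)] by blast
  have "is_solution n W \<Gamma> \<Delta> B"
    unfolding sol_char using F Pc c1 rec.hyps(2) by blast
  then show ?case using rec.IH by blast
qed

theorem mainTheorem3:
  fixes S :: "(nat \<times> ('f, 'p) fm) list" and p n :: nat
    and H U :: "'f trm list set list" and W :: "'f trm list set" and A :: "('f, 'p) cnf"
  assumes "sigma1_seq S p"
    and "herbrand_structure S p H"
    and "decomposition S H n U W"
    and "is_cnf A"
    and "is_solution n W (Gam S p U) (Del S p U) A"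
  shows "sf_terminates n W (Gam S p U) (Del S p U) A \<and>
         (\<forall>B. sf_out n W (Gam S p U) (Del S p U) A B \<longrightarrow>
              is_solution n W (Gam S p U) (Del S p U) B)"
  using terminates[OF assms(4)] out_sol assms(5) by blast

end
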